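(* Let $A\in\Theta(n,r)$. The orbit $e_A$ is closed in $\mathcal F_{\mathrm{ro}(A)}\times\mathcal F_{\mathrm{co}(A)}$ if and only if for all row indices $i<j$ and column indices $s<t$ one has $a_{it}a_{js}=0$ (every $2\times 2$ submatrix of $A$ has at least one zero anti-diagonal entry).
   Context: Fix positive integers $n,r$. $\Theta(n,r)$ is the set of $n\times n$ matrices $A=(a_{ij})$ with nonnegative integer entries summing to $r$; $\mathrm{ro}(A)=(\sum_j a_{1j},\dots,\sum_j a_{nj})$ and $\mathrm{co}(A)=(\sum_i a_{i1},\dots,\sum_i a_{in})$. Let $V$ be an $r$-dimensional vector space over a field that is finite or algebraically closed, $\mathcal F$ the variety of $n$-step flags $0=V_0\subseteq V_1\subseteq\cdots\subseteq V_n=V$, and for a composition $\lambda$ of $r$ into $n$ parts let $\mathcal F_\lambda$ be the flags with $\dim V_i-\dim V_{i-1}=\lambda_i$. The $GL(V)$-orbits on $\mathcal F\times\mathcal F$ (diagonal action) are in bijection with $\Theta(n,r)$: the orbit of $(f,f')$, $f=(V_i)$, $f'=(V'_j)$, corresponds to $A$ with $a_{ij}=\dim(V_i\cap V'_j)-\dim(V_i\cap V'_{j-1}+V_{i-1}\cap V'_j)$, and it lies in $\mathcal F_{\mathrm{ro}(A)}\times\mathcal F_{\mathrm{co}(A)}$. We write $e_A$ for this orbit. *)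

theory Defs
  imports "HOL-Analysis.Analysis" "HOL-Computational_Algebra.Polynomial"
begin

text \<open>The space V is the r-dimensional space 'k^'r with r = CARD('r).
  A flag (V_0,...,V_n) is a function f on nat with f i = UNIV for i >= n.\<close>

definition is_flag :: "nat \<Rightarrow> (nat \<Rightarrow> ('k::field^'r) set) \<Rightarrow> bool" where
  "is_flag n f \<longleftrightarrow> (\<forall>i. vec.subspace (f i)) \<and> f 0 = {0} \<and>
     (\<forall>i<n. f i \<subseteq> f (Suc i)) \<and> (\<forall>i\<ge>n. f i = UNIV)"

definition flags_of_type :: "nat \<Rightarrow> (nat \<Rightarrow> nat) \<Rightarrow> (nat \<Rightarrow> ('k::field^'r) set) set" where
  "flags_of_type n lam = {f. is_flag n f \<and>
     (\<forall>i\<in>{1..n}. vec.dim (f i) - vec.dim (f (i - 1)) = lam i)}"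

definition ssum :: "('k::field^'r) set \<Rightarrow> ('k^'r) set \<Rightarrow> ('k^'r) set" where
  "ssum U W = vec.span (U \<union> W)"

definition orbit_entry :: "(nat \<Rightarrow> ('k::field^'r) set) \<Rightarrow> (nat \<Rightarrow> ('k^'r) set) \<Rightarrow> nat \<Rightarrow> nat \<Rightarrow> nat" where
  "orbit_entry f f' i j = vec.dim (f i \<inter> f' j)
      - vec.dim (ssum (f i \<inter> f' (j - 1)) (f (i - 1) \<inter> f' j))"

definition Theta :: "nat \<Rightarrow> nat \<Rightarrow> (nat \<Rightarrow> nat \<Rightarrow> nat) set" where
  "Theta n r = {A. (\<forall>i j. A i j \<noteq> 0 \<longrightarrow> i \<in> {1..n} \<and> j \<in> {1..n}) \<and>
      (\<Sum>i=1..n. \<Sum>j=1..n. A i j) = r}"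

definition ro :: "nat \<Rightarrow> (nat \<Rightarrow> nat \<Rightarrow> nat) \<Rightarrow> nat \<Rightarrow> nat" where
  "ro n A i = (\<Sum>j=1..n. A i j)"

definition co :: "nat \<Rightarrow> (nat \<Rightarrow> nat \<Rightarrow> nat) \<Rightarrow> nat \<Rightarrow> nat" where
  "co n A j = (\<Sum>i=1..n. A i j)"

definition orbit :: "nat \<Rightarrow> (nat \<Rightarrow> nat \<Rightarrow> nat) \<Rightarrow> ((nat \<Rightarrow> ('k::field^'r) set) \<times> (nat \<Rightarrow> ('k^'r) set)) set" where
  "orbit n A = {(f, f'). is_flag n f \<and> is_flag n f' \<and>
      (\<forall>i\<in>{1..n}. \<forall>j\<in>{1..n}. orbit_entry f f' i j = A i j)}"

inductive_set poly_funs :: "(('c \<Rightarrow> 'k::comm_ring_1) \<Rightarrow> 'k) set" where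
  const: "(\<lambda>x. c) \<in> poly_funs"
| var: "(\<lambda>x. x v) \<in> poly_funs"
| add: "p \<in> poly_funs \<Longrightarrow> q \<in> poly_funs \<Longrightarrow> (\<lambda>x. p x + q x) \<in> poly_funs"
| mult: "p \<in> poly_funs \<Longrightarrow> q \<in> poly_funs \<Longrightarrow> (\<lambda>x. p x * q x) \<in> poly_funs"

definition zariski_closed :: "(('c \<Rightarrow> 'k::comm_ring_1)) set \<Rightarrow> bool" where
  "zariski_closed Z \<longleftrightarrow> (\<exists>P \<subseteq> poly_funs. Z = {x. \<forall>p\<in>P. p x = 0})"

definition flag_from :: "nat \<Rightarrow> (nat \<Rightarrow> nat) \<Rightarrow> (nat \<Rightarrow> 'k::field^'r) \<Rightarrow> nat \<Rightarrow> ('k^'r) set" where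
  "flag_from n lam b i = (if i < n then vec.span (b ` {j. j < (\<Sum>l=1..i. lam l)}) else UNIV)"

definition is_basis_family :: "(nat \<Rightarrow> 'k::field^'r) \<Rightarrow> bool" where
  "is_basis_family b \<longleftrightarrow> inj_on b {..<CARD('r)} \<and> vec.independent (b ` {..<CARD('r)})"

text \<open>Coordinates of a pair of matrices (g,h): x (False,j,c) = c-th coordinate of the j-th
  column of g, x (True,j,c) likewise for h.\<close>
definition basis_of :: "((bool \<times> nat \<times> 'r) \<Rightarrow> 'k) \<Rightarrow> bool \<Rightarrow> nat \<Rightarrow> 'k^'r" where
  "basis_of x s j = (\<chi> c. x (s, j, c))"

text \<open>GL_r x GL_r as a subset of affine space (coordinates with j >= r are forced to be 0).\<close>
definition GL_pairs :: "((bool \<times> nat \<times> 'r::finite) \<Rightarrow> 'k::field) set" where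
  "GL_pairs = {x. (\<forall>s j c. j \<ge> CARD('r) \<longrightarrow> x (s, j, c) = 0) \<and>
      is_basis_family (basis_of x False) \<and> is_basis_family (basis_of x True)}"

text \<open>This is the Zariski topology of the variety F_lam x F_mu = (G x G)/(P_lam x P_mu).\<close>
definition flag_closed :: "nat \<Rightarrow> (nat \<Rightarrow> nat) \<Rightarrow> (nat \<Rightarrow> nat) \<Rightarrow>
    ((nat \<Rightarrow> ('k::field^'r::finite) set) \<times> (nat \<Rightarrow> ('k^'r) set)) set \<Rightarrow> bool" where
  "flag_closed n lam mu S \<longleftrightarrow> S \<subseteq> flags_of_type n lam \<times> flags_of_type n mu \<and>
     (\<exists>Z. zariski_closed Z \<and>
        {x \<in> GL_pairs. (flag_from n lam (basis_of x False), flag_from n mu (basis_of x True)) \<in> S}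
          = GL_pairs \<inter> Z)"

end

theory Submission
  imports Defs
begin


lemma poly_funs_sum:
  assumes "finite S" "\<And>s. s \<in> S \<Longrightarrow> f s \<in> poly_funs"
  shows "(\<lambda>x. \<Sum>s\<in>S. f s x) \<in> poly_funs"
  using assms
proof (induction S rule: finite_induct)
  case empty then show ?case using poly_funs.const[of 0] by simp
next
  case (insert a S)
  have "(\<lambda>x. f a x + (\<Sum>s\<in>S. f s x)) \<in> poly_funs"
    using insert by (intro poly_funs.add) (auto intro: eta_contract_eq)
  then show ?case using insert by simp
qed

lemma poly_funs_prod:
  assumes "finite S" "\<And>s. s \<in> S \<Longrightarrow> f s \<in> poly_funs"
  shows "(\<lambda>x. \<Prod>s\<in>S. f s x) \<in> poly_funs"
  using assms
proof (induction S rule: finite_induct)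
  case empty then show ?case using poly_funs.const[of 1] by simp
next
  case (insert a S)
  have "(\<lambda>x. f a x * (\<Prod>s\<in>S. f s x)) \<in> poly_funs"
    using insert by (intro poly_funs.mult) auto
  then show ?case using insert by simp
qed

lemma poly_funs_det:
  fixes F :: "'n::finite \<Rightarrow> 'n \<Rightarrow> ('c \<Rightarrow> 'k::comm_ring_1) \<Rightarrow> 'k"
  assumes "\<And>a b. F a b \<in> poly_funs"
  shows "(\<lambda>x. det (\<chi> a b. F a b x)) \<in> poly_funs"
proof -
  have "(\<lambda>x. \<Sum>p\<in>{p. p permutes (UNIV::'n set)}. of_int (sign p) * (\<Prod>a\<in>UNIV. F a (p a) x)) \<in> poly_funs"
    apply (rule poly_funs_sum)
     apply (simp add: finite_permutations)
    apply (rule poly_funs.mult[OF poly_funs.const])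
    apply (rule poly_funs_prod) using assms by auto
  then show ?thesis by (simp add: det_def)
qed

lemma poly_funs_curve:
  fixes X :: "'k::comm_ring_1 \<Rightarrow> 'c \<Rightarrow> 'k"
  assumes "p \<in> poly_funs" "\<And>v. \<exists>Q. \<forall>t. X t v = poly Q t"
  shows "\<exists>Q. \<forall>t. p (X t) = poly Q t"
  using assms(1)
proof induction
  case (const c) then show ?case by (intro exI[of _ "[:c:]"]) simp
next
  case (var v) then show ?case using assms(2) by simp
next
  case (add p q)
  then obtain P Q where "\<forall>t. p (X t) = poly P t" "\<forall>t. q (X t) = poly Q t" by blast
  then show ?case by (intro exI[of _ "P + Q"]) simp
next
  case (mult p q)
  then obtain P Q where "\<forall>t. p (X t) = poly P t" "\<forall>t. q (X t) = poly Q t" by blast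
  then show ?case by (intro exI[of _ "P * Q"]) simp
qed

lemma alg_closed_infinite: "infinite (UNIV :: 'k::alg_closed_field set)"
proof
  assume fin: "finite (UNIV :: 'k set)"
  define p :: "'k poly" where "p = 1 + (\<Prod>a\<in>UNIV. [:-a, 1:])"
  have dq: "degree (\<Prod>a\<in>(UNIV::'k set). [:-a, 1:]) = card (UNIV :: 'k set)"
    by (subst degree_prod_eq_sum_degree) auto
  have "card (UNIV :: 'k set) > 0" using fin by (simp add: card_gt_0_iff)
  then have "degree p > 0" unfolding p_def using dq
    by (metis add.commute degree_add_eq_right degree_1)
  then obtain x where "poly p x = 0" using alg_closed_imp_poly_has_root by blast
  moreover have "poly (\<Prod>a\<in>(UNIV::'k set). [:-a, 1:]) x = 0"
    by (simp add: poly_prod fin prod_zero_iff)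
  ultimately show False by (simp add: p_def)
qed

lemma poly_zero_off0:
  fixes Q :: "'k::alg_closed_field poly"
  assumes "\<And>t. t \<noteq> 0 \<Longrightarrow> poly Q t = 0"
  shows "poly Q 0 = 0"
proof -
  have "UNIV - {0} \<subseteq> {t. poly Q t = 0}" using assms by auto
  moreover have "infinite (UNIV - {0::'k})" using alg_closed_infinite by simp
  ultimately have "infinite {t. poly Q t = 0}" using finite_subset by blast
  then have "Q = 0" using poly_roots_finite by blast
  then show ?thesis by simp
qed




lemma span_axis:
  "vec.span ((\<lambda>i. axis i 1) ` d) = {x::'k::field^'r. \<forall>i. i \<notin> d \<longrightarrow> x$i = 0}"
proof
  show "vec.span ((\<lambda>i. axis i 1) ` d) \<subseteq> {x::'k::field^'r. \<forall>i. i \<notin> d \<longrightarrow> x$i = 0}"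
    by (rule vec.span_minimal) (auto simp: vec.subspace_def axis_def)
  show "{x::'k::field^'r. \<forall>i. i \<notin> d \<longrightarrow> x$i = 0} \<subseteq> vec.span ((\<lambda>i. axis i 1) ` d)"
  proof
    fix x :: "'k^'r" assume x: "x \<in> {x. \<forall>i. i \<notin> d \<longrightarrow> x$i = 0}"
    have "x = (\<Sum>i\<in>UNIV. x $ i *s axis i 1)"
      by (rule basis_expansion[symmetric])
    also have "\<dots> = (\<Sum>i\<in>d. (x $ i) *s axis i 1)"
      by (rule sum.mono_neutral_cong_right) (use x in auto)
    also have "\<dots> \<in> vec.span ((\<lambda>i. axis i 1) ` d)"
      by (simp add: vec.span_sum vec.span_clauses)
    finally show "x \<in> vec.span ((\<lambda>i. axis i 1) ` d)" .
  qed
qed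

lemma dim_span_axis_Int:
  "vec.dim (vec.span ((\<lambda>i. axis i (1::'k::field)) ` X) \<inter> vec.span ((\<lambda>i. axis i 1) ` Y) :: ('k^'r) set)
     = card (X \<inter> Y)"
proof -
  have "vec.span ((\<lambda>i. axis i (1::'k)) ` X) \<inter> vec.span ((\<lambda>i. axis i 1) ` Y)
      = {x::'k^'r. \<forall>i. i \<notin> X \<inter> Y \<longrightarrow> x$i = 0}"
    unfolding span_axis by auto
  then show ?thesis using dim_substandard_cart[of "X \<inter> Y"] by (simp only:)
qed

lemma dimension_vec: "vec.dimension TYPE('k::field) TYPE('r::finite) = CARD('r)"
  using vec_dim_card[where 'a='k and 'n='r] vec.dim_UNIV by (simp add: vec.dimension_def)

lemma is_basis_family_iff:
  "is_basis_family (b :: nat \<Rightarrow> 'k::field^'r::finite) \<longleftrightarrow> vec.span (b ` {..<CARD('r)}) = UNIV"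
proof
  assume "is_basis_family b"
  then have i: "inj_on b {..<CARD('r)}" "vec.independent (b ` {..<CARD('r)})"
    by (auto simp: is_basis_family_def)
  have "vec.dim (b ` {..<CARD('r)}) = CARD('r)"
    using vec.dim_eq_card_independent[OF i(2)] card_image[OF i(1)] by simp
  then show "vec.span (b ` {..<CARD('r)}) = UNIV"
    using vec.dim_eq_full dimension_vec by metis
next
  assume sp: "vec.span (b ` {..<CARD('r)}) = UNIV"
  have c: "card (b ` {..<CARD('r)}) \<le> CARD('r)"
    using card_image_le[of "{..<CARD('r)}" b] by simp
  have ind: "vec.independent (b ` {..<CARD('r)})"
    apply (rule vec.card_le_dim_spanning[where V=UNIV])
    using sp c vec_dim_card[where 'a='k and 'n='r] by (auto simp del: vec_dim_card)
  have "vec.dim (b ` {..<CARD('r)}) = CARD('r)"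
    using sp vec.dim_eq_full dimension_vec by metis
  then have "card (b ` {..<CARD('r)}) = card {..<CARD('r)}"
    using vec.dim_eq_card_independent[OF ind] by simp
  then have "inj_on b {..<CARD('r)}"
    by (rule eq_card_imp_inj_on[rotated]) simp
  with ind show "is_basis_family b" by (simp add: is_basis_family_def)
qed

definition ridx :: "'r::finite \<Rightarrow> nat" where
  "ridx = (SOME h. bij_betw h (UNIV::'r set) {..<CARD('r)})"

lemma ridx_bij: "bij_betw (ridx :: 'r::finite \<Rightarrow> nat) UNIV {..<CARD('r)}"
proof -
  have "\<exists>h. bij_betw h (UNIV::'r set) {..<CARD('r)}"
    using ex_bij_betw_finite_nat[of "UNIV::'r set"] by (simp add: atLeast0LessThan)
  then show ?thesis unfolding ridx_def by (rule someI_ex)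
qed

lemma ridx_image: "ridx ` (UNIV :: 'r::finite set) = {..<CARD('r)}"
  using ridx_bij bij_betw_imp_surj_on by blast

definition matf :: "(nat \<Rightarrow> 'k^'r) \<Rightarrow> 'k^'r^'r::finite" where
  "matf v = (\<chi> a b. v (ridx b) $ a)"

lemma columns_matf:
  fixes v :: "nat \<Rightarrow> 'k^'r::finite"
  shows "columns (matf v) = v ` {..<CARD('r)}"
proof -
  have "columns (matf v) = v ` ridx ` (UNIV :: 'r set)"
    by (auto simp: columns_def column_def matf_def vec_eq_iff)
  then show ?thesis by (simp add: ridx_image)
qed

lemma det_matf_iff:
  fixes v :: "nat \<Rightarrow> 'k::field^'r::finite"
  shows "det (matf v) \<noteq> 0 \<longleftrightarrow> vec.span (v ` {..<CARD('r)}) = UNIV"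
  by (simp add: invertible_det_nz[symmetric] invertible_right_inverse
      matrix_right_invertible_span_columns columns_matf)

lemma exchange_crit:
  fixes h :: "nat \<Rightarrow> 'k::field^'r::finite"
  assumes hb: "is_basis_family h" and m: "m \<le> CARD('r)"
  shows "g \<in> vec.span (h ` {..<m}) \<longleftrightarrow>
    (\<forall>l. m \<le> l \<and> l < CARD('r) \<longrightarrow> vec.span ((h(l:=g)) ` {..<CARD('r)}) \<noteq> UNIV)"
proof
  assume g: "g \<in> vec.span (h ` {..<m})"
  show "\<forall>l. m \<le> l \<and> l < CARD('r) \<longrightarrow> vec.span ((h(l:=g)) ` {..<CARD('r)}) \<noteq> UNIV"
  proof (intro allI impI notI)
    fix l assume l: "m \<le> l \<and> l < CARD('r)" and sp: "vec.span ((h(l:=g)) ` {..<CARD('r)}) = UNIV"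
    let ?T = "h ` ({..<CARD('r)} - {l})"
    have "h ` {..<m} \<subseteq> ?T" using l m by auto
    then have gT: "g \<in> vec.span ?T" using g vec.span_mono by blast
    have "(h(l:=g)) ` {..<CARD('r)} \<subseteq> vec.span ?T"
      using gT by (auto intro: vec.span_base)
    then have "vec.span ((h(l:=g)) ` {..<CARD('r)}) \<subseteq> vec.span ?T"
      by (metis vec.span_minimal vec.subspace_span)
    then have hl: "h l \<in> vec.span ?T" using sp by auto
    have inj: "inj_on h {..<CARD('r)}" and ind: "vec.independent (h ` {..<CARD('r)})"
      using hb by (auto simp: is_basis_family_def)
    have "?T = h ` {..<CARD('r)} - {h l}"
      using inj l by (auto simp: inj_on_def)
    then have "vec.dependent (h ` {..<CARD('r)})"
      using hl l unfolding vec.dependent_def by auto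
    with ind show False by simp
  qed
next
  assume H: "\<forall>l. m \<le> l \<and> l < CARD('r) \<longrightarrow> vec.span ((h(l:=g)) ` {..<CARD('r)}) \<noteq> UNIV"
  have inj: "inj_on h {..<CARD('r)}"
    using hb by (auto simp: is_basis_family_def)
  have spU: "vec.span (h ` {..<CARD('r)}) = UNIV"
    using hb is_basis_family_iff by blast
  have "g \<in> vec.span (h ` {..<CARD('r)})" using spU by simp
  then obtain u where u: "g = (\<Sum>v\<in>h ` {..<CARD('r)}. u v *s v)"
    using vec.span_finite[of "h ` {..<CARD('r)}"] by auto
  define c where "c l = u (h l)" for l
  have gsum: "g = (\<Sum>l<CARD('r). c l *s h l)"
    using u by (simp add: sum.reindex[OF inj] c_def)
  have c0: "c l = 0" if l: "m \<le> l" "l < CARD('r)" for l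
  proof (rule ccontr)
    assume cl: "c l \<noteq> 0"
    let ?S = "vec.span ((h(l:=g)) ` {..<CARD('r)})"
    have hk: "h k \<in> ?S" if "k < CARD('r)" "k \<noteq> l" for k
      using that by (intro vec.span_base) (auto intro!: image_eqI[of _ _ k])
    have gS: "g \<in> ?S" using l by (intro vec.span_base) (auto intro!: image_eqI[of _ _ l])
    have rest: "(\<Sum>k\<in>{..<CARD('r)} - {l}. c k *s h k) \<in> ?S"
      by (intro vec.span_sum vec.span_scale hk) auto
    have "g = c l *s h l + (\<Sum>k\<in>{..<CARD('r)} - {l}. c k *s h k)"
      using gsum l by (simp add: sum.remove[of "{..<CARD('r)}" l])
    then have "h l = (1 / c l) *s (g - (\<Sum>k\<in>{..<CARD('r)} - {l}. c k *s h k))"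
      using cl by (simp add: field_simps)
    then have "h l \<in> ?S"
      using gS rest by (simp add: vec.span_diff vec.span_scale)
    then have "h ` {..<CARD('r)} \<subseteq> ?S" using hk by auto
    then have "UNIV \<subseteq> ?S" using spU
      by (metis vec.span_minimal vec.subspace_span)
    then show False using H l by auto
  qed
  have "g = (\<Sum>l<m. c l *s h l)"
    using gsum m c0 by (intro trans[OF gsum] sum.mono_neutral_right) auto
  also have "\<dots> \<in> vec.span (h ` {..<m})"
    by (intro vec.span_sum vec.span_scale vec.span_base) auto
  finally show "g \<in> vec.span (h ` {..<m})" .
qed




lemma flag_subspace: "is_flag n f \<Longrightarrow> vec.subspace (f i)"
  by (simp add: is_flag_def)

lemma flag_mono: assumes "is_flag n f" "i \<le> i'" shows "f i \<subseteq> f i'"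
  using assms(2)
proof (induction i' rule: dec_induct)
  case base then show ?case by simp
next
  case (step m)
  have "f m \<subseteq> f (Suc m)"
    using assms(1) unfolding is_flag_def by (cases "m < n") auto
  with step show ?case by blast
qed

definition dd :: "(nat \<Rightarrow> ('k::field^'r) set) \<Rightarrow> (nat \<Rightarrow> ('k^'r) set) \<Rightarrow> nat \<Rightarrow> nat \<Rightarrow> nat" where
  "dd f f' i j = vec.dim (f i \<inter> f' j)"

definition NN :: "(nat \<Rightarrow> nat \<Rightarrow> nat) \<Rightarrow> nat \<Rightarrow> nat \<Rightarrow> nat" where
  "NN A i j = (\<Sum>k=1..i. \<Sum>l=1..j. A k l)"

lemma entry_formula:
  fixes f f' :: "nat \<Rightarrow> ('k::field^'r::finite) set"
  assumes F: "is_flag n f" "is_flag n f'" and ij: "1 \<le> i" "1 \<le> j"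
  shows "int (orbit_entry f f' i j) = int (dd f f' i j) - int (dd f f' i (j-1))
           - int (dd f f' (i-1) j) + int (dd f f' (i-1) (j-1))"
proof -
  let ?X = "f i \<inter> f' (j-1)" and ?Y = "f (i-1) \<inter> f' j"
  have sX: "vec.subspace ?X" and sY: "vec.subspace ?Y"
    using F by (auto intro: vec.subspace_inter flag_subspace)
  have XY: "?X \<inter> ?Y = f (i-1) \<inter> f' (j-1)"
    using flag_mono[OF F(1), of "i-1" i] flag_mono[OF F(2), of "j-1" j] by auto
  have sum: "ssum ?X ?Y = {x + y |x y. x \<in> ?X \<and> y \<in> ?Y}"
  proof -
    have e1: "vec.span ?X = ?X" and e2: "vec.span ?Y = ?Y" using sX sY by (simp_all add: vec.span_eq_iff)
    show ?thesis unfolding ssum_def vec.span_Un e1 e2 by simp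
  qed
  have eq: "vec.dim (ssum ?X ?Y) + vec.dim (f (i-1) \<inter> f' (j-1)) = vec.dim ?X + vec.dim ?Y"
    using vec.dim_sums_Int[OF sX sY] XY sum by simp
  have "ssum ?X ?Y \<subseteq> f i \<inter> f' j"
    unfolding ssum_def
    apply (rule vec.span_minimal)
    using flag_mono[OF F(1), of "i-1" i] flag_mono[OF F(2), of "j-1" j]
      F by (auto intro: vec.subspace_inter flag_subspace)
  then have le: "vec.dim (ssum ?X ?Y) \<le> vec.dim (f i \<inter> f' j)"
    by (rule vec.dim_subset)
  show ?thesis
    unfolding orbit_entry_def dd_def using eq le by linarith
qed

lemma NN_rec:
  "int (NN A (Suc i) (Suc j)) = int (A (Suc i) (Suc j)) + int (NN A (Suc i) j)
      + int (NN A i (Suc j)) - int (NN A i j)"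
  by (simp add: NN_def sum.distrib)

lemma NN_0 [simp]: "NN A 0 j = 0" "NN A i 0 = 0"
  by (simp_all add: NN_def)

lemma dd_0:
  assumes "is_flag n f" "is_flag n f'"
  shows "dd f f' 0 j = 0" "dd f f' i 0 = 0"
  using assms by (auto simp: dd_def is_flag_def)

lemma orbit_dd:
  fixes f f' :: "nat \<Rightarrow> ('k::field^'r::finite) set"
  assumes F: "is_flag n f" "is_flag n f'"
  shows "(\<forall>i\<in>{1..n}. \<forall>j\<in>{1..n}. orbit_entry f f' i j = A i j) \<longleftrightarrow>
         (\<forall>i\<le>n. \<forall>j\<le>n. dd f f' i j = NN A i j)"
proof
  assume H: "\<forall>i\<in>{1..n}. \<forall>j\<in>{1..n}. orbit_entry f f' i j = A i j"
  have "i \<le> n \<longrightarrow> j \<le> n \<longrightarrow> dd f f' i j = NN A i j" for i j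
  proof (induction i arbitrary: j)
    case 0 then show ?case using dd_0[OF F] by simp
  next
    case (Suc i)
    note outerIH = Suc.IH
    show ?case
    proof (induction j)
      case 0 then show ?case using dd_0[OF F] by simp
    next
      case (Suc j)
      show ?case
      proof (intro impI)
        assume a: "Suc i \<le> n" "Suc j \<le> n"
        have "int (orbit_entry f f' (Suc i) (Suc j)) = int (A (Suc i) (Suc j))"
          using H[rule_format, of "Suc i" "Suc j"] a by simp
        moreover have "int (orbit_entry f f' (Suc i) (Suc j)) = int (dd f f' (Suc i) (Suc j)) - int (dd f f' (Suc i) j)
           - int (dd f f' i (Suc j)) + int (dd f f' i j)"
          using entry_formula[OF F, of "Suc i" "Suc j"] by simp
        moreover have "dd f f' (Suc i) j = NN A (Suc i) j" using Suc.IH a by simp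
        moreover have "dd f f' i j = NN A i j" using outerIH[of j] a by simp
        moreover have "dd f f' i (Suc j) = NN A i (Suc j)" using outerIH[of "Suc j"] a by simp
        ultimately show "dd f f' (Suc i) (Suc j) = NN A (Suc i) (Suc j)" using NN_rec[of A i j] by linarith
      qed
    qed
  qed
  then show "\<forall>i\<le>n. \<forall>j\<le>n. dd f f' i j = NN A i j" by blast
next
  assume H: "\<forall>i\<le>n. \<forall>j\<le>n. dd f f' i j = NN A i j"
  show "\<forall>i\<in>{1..n}. \<forall>j\<in>{1..n}. orbit_entry f f' i j = A i j"
  proof (intro ballI)
    fix i j assume i: "i \<in> {1..n}" and j: "j \<in> {1..n}"
    define i0 j0 where "i0 = i - 1" "j0 = j - 1"
    have ij: "i = Suc i0" "j = Suc j0" using i j by (auto simp: i0_j0_def)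
    have i0: "i0 \<le> n" "j0 \<le> n" "i \<le> n" "j \<le> n" using i j ij by auto
    have "int (orbit_entry f f' i j) = int (dd f f' (Suc i0) (Suc j0)) - int (dd f f' (Suc i0) j0)
           - int (dd f f' i0 (Suc j0)) + int (dd f f' i0 j0)"
      using entry_formula[OF F, of i j] unfolding ij by simp
    moreover have "dd f f' (Suc i0) (Suc j0) = NN A (Suc i0) (Suc j0)" using H i0 unfolding ij by blast
    moreover have "dd f f' (Suc i0) j0 = NN A (Suc i0) j0" using H i0 unfolding ij by blast
    moreover have "dd f f' i0 (Suc j0) = NN A i0 (Suc j0)" using H i0 unfolding ij by blast
    moreover have "dd f f' i0 j0 = NN A i0 j0" using H i0 unfolding ij by blast
    ultimately have "int (orbit_entry f f' i j) = int (A i j)" using NN_rec[of A i0 j0] unfolding ij by linarith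
    then show "orbit_entry f f' i j = A i j" by simp
  qed
qed

lemma orbit_iff_dd:
  fixes f f' :: "nat \<Rightarrow> ('k::field^'r::finite) set"
  assumes F: "is_flag n f" "is_flag n f'"
  shows "(f, f') \<in> orbit n A \<longleftrightarrow> (\<forall>i\<le>n. \<forall>j\<le>n. dd f f' i j = NN A i j)"
  using orbit_dd[OF F] F by (simp add: orbit_def)

lemma NN_n_ro: "NN A i n = (\<Sum>k=1..i. ro n A k)"
  by (simp add: NN_def ro_def)

lemma NN_n_co: "NN A n j = (\<Sum>l=1..j. co n A l)"
  unfolding NN_def co_def by (rule sum.swap)

lemma orbit_types:
  fixes f f' :: "nat \<Rightarrow> ('k::field^'r::finite) set"
  assumes o: "(f, f') \<in> orbit n A"
  shows "f \<in> flags_of_type n (ro n A)" "f' \<in> flags_of_type n (co n A)"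
proof -
  have F: "is_flag n f" "is_flag n f'" using o by (auto simp: orbit_def)
  have D: "\<forall>i\<le>n. \<forall>j\<le>n. dd f f' i j = NN A i j" using o orbit_iff_dd[OF F] by blast
  have d1: "vec.dim (f i) = (\<Sum>k=1..i. ro n A k)" if "i \<le> n" for i
  proof -
    have "f' n = UNIV" using F(2) by (simp add: is_flag_def)
    then show ?thesis using D[rule_format, of i n] that NN_n_ro[of A i n] by (auto simp: dd_def)
  qed
  have d2: "vec.dim (f' j) = (\<Sum>l=1..j. co n A l)" if "j \<le> n" for j
  proof -
    have "f n = UNIV" using F(1) by (simp add: is_flag_def)
    then show ?thesis using D[rule_format, of n j] that NN_n_co[of A n j] by (auto simp: dd_def)
  qed
  show "f \<in> flags_of_type n (ro n A)"
    unfolding flags_of_type_def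
  proof (intro CollectI conjI F ballI)
    fix i assume i: "i \<in> {1..n}"
    then obtain i0 where "i = Suc i0" by (cases i) auto
    then show "vec.dim (f i) - vec.dim (f (i - 1)) = ro n A i" using d1 i by simp
  qed
  show "f' \<in> flags_of_type n (co n A)"
    unfolding flags_of_type_def
  proof (intro CollectI conjI F ballI)
    fix i assume i: "i \<in> {1..n}"
    then obtain i0 where "i = Suc i0" by (cases i) auto
    then show "vec.dim (f' i) - vec.dim (f' (i - 1)) = co n A i" using d2 i by simp
  qed
qed




lemma flag_from_is_flag:
  assumes "n > 0"
  shows "is_flag n (flag_from n lam b)"
  unfolding is_flag_def
proof (intro conjI allI impI)
  fix i show "vec.subspace (flag_from n lam b i)"
    by (simp add: flag_from_def vec.subspace_UNIV)
next
  show "flag_from n lam b 0 = {0}" using assms by (simp add: flag_from_def)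
next
  fix i assume i: "i < n"
  show "flag_from n lam b i \<subseteq> flag_from n lam b (Suc i)"
  proof (cases "Suc i < n")
    case True
    then show ?thesis using i
      by (auto simp: flag_from_def intro!: vec.span_mono image_mono)
  next
    case False then show ?thesis by (simp add: flag_from_def)
  qed
next
  fix i assume "n \<le> i" then show "flag_from n lam b i = UNIV" by (simp add: flag_from_def)
qed

lemma psum_le: "i \<le> n \<Longrightarrow> (\<Sum>l=1..i. lam l) \<le> (\<Sum>l=1..n. (lam :: nat \<Rightarrow> nat) l)"
  by (rule sum_mono2) auto

lemma flag_from_span:
  fixes b :: "nat \<Rightarrow> 'k::field^'r::finite"
  assumes bb: "is_basis_family b" and S: "(\<Sum>l=1..n. lam l) = CARD('r)" and i: "i \<le> n"
  shows "flag_from n lam b i = vec.span (b ` {..<(\<Sum>l=1..i. lam l)})"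
proof (cases "i < n")
  case True then show ?thesis by (simp add: flag_from_def lessThan_def)
next
  case False
  then have "i = n" using i by simp
  then show ?thesis using is_basis_family_iff[of b] bb S by (simp add: flag_from_def)
qed

lemma dim_prefix:
  fixes b :: "nat \<Rightarrow> 'k::field^'r::finite"
  assumes bb: "is_basis_family b" and m: "m \<le> CARD('r)"
  shows "vec.dim (vec.span (b ` {..<m})) = m"
proof -
  have inj: "inj_on b {..<CARD('r)}" and ind: "vec.independent (b ` {..<CARD('r)})"
    using bb by (auto simp: is_basis_family_def)
  have ind2: "vec.independent (b ` {..<m})"
    by (rule vec.independent_mono[OF ind]) (use m in auto)
  have "card (b ` {..<m}) = m"
    using inj m by (subst card_image) (auto intro: inj_on_subset)
  then show ?thesis using vec.dim_span_eq_card_independent[OF ind2] by simp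
qed

lemma sum_pairs: "NN A i j = (\<Sum>p\<in>{1..i}\<times>{1..j}. A (fst p) (snd p))"
  by (simp add: NN_def sum.cartesian_product split_def)

lemma NW_min:
  assumes NW: "\<forall>i j s t. 1 \<le> i \<and> i < j \<and> j \<le> n \<and> 1 \<le> s \<and> s < t \<and> t \<le> n \<longrightarrow> A i t * A j s = 0"
    and ij: "i \<le> n" "j \<le> n"
  shows "NN A i j = min (NN A i n) (NN A n j)"
proof (cases "NN A i n \<le> NN A n j")
  case True
  have z: "A k l = 0" if k: "1 \<le> k" "k \<le> i" and l: "j < l" "l \<le> n" for k l
  proof (rule ccontr)
    assume nz: "A k l \<noteq> 0"
    have z2: "A k' l' = 0" if "k < k'" "k' \<le> n" "1 \<le> l'" "l' < l" for k' l'
      using NW[rule_format, of k k' l' l] that nz k l ij by auto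
    have zz: "\<forall>p\<in>{1..n}\<times>{1..j} - {1..k}\<times>{1..j}. A (fst p) (snd p) = 0"
    proof
      fix p assume "p \<in> {1..n}\<times>{1..j} - {1..k}\<times>{1..j}"
      then show "A (fst p) (snd p) = 0" using l by (intro z2) auto
    qed
    have e1: "NN A n j = NN A k j"
      unfolding sum_pairs
      by (rule sum.mono_neutral_right) (use k ij zz in auto)
    have "NN A k j + A k l = (\<Sum>p\<in>insert (k,l) ({1..k}\<times>{1..j}). A (fst p) (snd p))"
      unfolding sum_pairs using l by (subst sum.insert) auto
    also have "\<dots> \<le> NN A k n"
      unfolding sum_pairs by (rule sum_mono2) (use k l in auto)
    also have "\<dots> \<le> NN A i n"
      unfolding sum_pairs by (rule sum_mono2) (use k in auto)
    finally show False using e1 True nz by linarith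
  qed
  have zz: "\<forall>p\<in>{1..i}\<times>{1..n} - {1..i}\<times>{1..j}. A (fst p) (snd p) = 0"
  proof
    fix p assume "p \<in> {1..i}\<times>{1..n} - {1..i}\<times>{1..j}"
    then show "A (fst p) (snd p) = 0" by (intro z) auto
  qed
  have "NN A i n = NN A i j"
    unfolding sum_pairs
    by (rule sum.mono_neutral_right) (use ij zz in auto)
  then show ?thesis using True by simp
next
  case False
  have z: "A k l = 0" if k: "i < k" "k \<le> n" and l: "1 \<le> l" "l \<le> j" for k l
  proof (rule ccontr)
    assume nz: "A k l \<noteq> 0"
    have z2: "A k' l' = 0" if "k' < k" "1 \<le> k'" "l < l'" "l' \<le> n" for k' l'
      using NW[rule_format, of k' k l l'] that nz k l ij by auto
    have zz: "\<forall>p\<in>{1..i}\<times>{1..n} - {1..i}\<times>{1..l}. A (fst p) (snd p) = 0"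
    proof
      fix p assume "p \<in> {1..i}\<times>{1..n} - {1..i}\<times>{1..l}"
      then show "A (fst p) (snd p) = 0" using k by (intro z2) auto
    qed
    have e1: "NN A i n = NN A i l"
      unfolding sum_pairs
      by (rule sum.mono_neutral_right) (use l ij zz in auto)
    have "NN A i l + A k l = (\<Sum>p\<in>insert (k,l) ({1..i}\<times>{1..l}). A (fst p) (snd p))"
      unfolding sum_pairs using k by (subst sum.insert) auto
    also have "\<dots> \<le> NN A n l"
      unfolding sum_pairs by (rule sum_mono2) (use k l in auto)
    also have "\<dots> \<le> NN A n j"
      unfolding sum_pairs by (rule sum_mono2) (use l in auto)
    finally show False using e1 False nz by linarith
  qed
  have zz: "\<forall>p\<in>{1..n}\<times>{1..j} - {1..i}\<times>{1..j}. A (fst p) (snd p) = 0"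
  proof
    fix p assume "p \<in> {1..n}\<times>{1..j} - {1..i}\<times>{1..j}"
    then show "A (fst p) (snd p) = 0" by (intro z) auto
  qed
  have "NN A n j = NN A i j"
    unfolding sum_pairs
    by (rule sum.mono_neutral_right) (use ij zz in auto)
  then show ?thesis using False by simp
qed




lemma dim_min_iff:
  fixes U W :: "('k::field^'r::finite) set"
  assumes sU: "vec.subspace U" and sW: "vec.subspace W"
  shows "vec.dim (U \<inter> W) = min (vec.dim U) (vec.dim W) \<longleftrightarrow>
    ((vec.dim U \<le> vec.dim W \<longrightarrow> U \<subseteq> W) \<and> (vec.dim W \<le> vec.dim U \<longrightarrow> W \<subseteq> U))"
proof -
  have sI: "vec.subspace (U \<inter> W)" using sU sW by (rule vec.subspace_inter)
  have l1: "vec.dim (U \<inter> W) = vec.dim U \<longleftrightarrow> U \<subseteq> W"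
  proof
    assume "vec.dim (U \<inter> W) = vec.dim U"
    then have "U \<inter> W = U" using vec.subspace_dim_equal[OF sI sU] by auto
    then show "U \<subseteq> W" by auto
  next
    assume "U \<subseteq> W" then show "vec.dim (U \<inter> W) = vec.dim U" by (simp add: Int_absorb2)
  qed
  have l2: "vec.dim (U \<inter> W) = vec.dim W \<longleftrightarrow> W \<subseteq> U"
  proof
    assume "vec.dim (U \<inter> W) = vec.dim W"
    then have "U \<inter> W = W" using vec.subspace_dim_equal[OF sI sW] by auto
    then show "W \<subseteq> U" by auto
  next
    assume "W \<subseteq> U" then show "vec.dim (U \<inter> W) = vec.dim W" by (simp add: Int_absorb1)
  qed
  show ?thesis using l1 l2 by (cases "vec.dim U \<le> vec.dim W") (auto simp: min_def)
qed

lemma span_image_subset_iff: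
  assumes "vec.subspace S"
  shows "vec.span (g ` K) \<subseteq> S \<longleftrightarrow> (\<forall>k\<in>K. g k \<in> S)"
proof
  assume "vec.span (g ` K) \<subseteq> S" then show "\<forall>k\<in>K. g k \<in> S" by (auto intro: vec.span_base)
next
  assume "\<forall>k\<in>K. g k \<in> S" then show "vec.span (g ` K) \<subseteq> S"
    using vec.span_minimal[of "g ` K" S] assms by auto
qed

lemma det_matf_iff':
  fixes v :: "nat \<Rightarrow> 'k::field^'r::finite"
  shows "vec.span (v ` {..<CARD('r)}) \<noteq> UNIV \<longleftrightarrow> det (matf v) = 0"
  using det_matf_iff[of v] by blast

lemma span_sub_span_crit:
  fixes g h :: "nat \<Rightarrow> 'k::field^'r::finite"
  assumes hb: "is_basis_family h" and m: "m \<le> CARD('r)"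
  shows "vec.span (g ` {..<p}) \<subseteq> vec.span (h ` {..<m}) \<longleftrightarrow>
    (\<forall>k<p. \<forall>l. m \<le> l \<and> l < CARD('r) \<longrightarrow> det (matf (h(l := g k))) = 0)"
  unfolding span_image_subset_iff[OF vec.subspace_span] exchange_crit[OF hb m] det_matf_iff'
  by (simp only: Ball_def lessThan_iff)

definition Rs :: "nat \<Rightarrow> (nat \<Rightarrow> nat \<Rightarrow> nat) \<Rightarrow> nat \<Rightarrow> nat" where "Rs n A i = NN A i n"
definition Cs :: "nat \<Rightarrow> (nat \<Rightarrow> nat \<Rightarrow> nat) \<Rightarrow> nat \<Rightarrow> nat" where "Cs n A j = NN A n j"

definition detf :: "bool \<Rightarrow> nat \<Rightarrow> nat \<Rightarrow> ((bool \<times> nat \<times> 'r::finite) \<Rightarrow> 'k::field) \<Rightarrow> 'k" where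
  "detf s k l x = det (matf ((basis_of x s)(l := basis_of x (\<not> s) k)))"

lemma detf_poly: "detf s k l \<in> poly_funs"
proof -
  have "detf s k l = (\<lambda>x. det (\<chi> a b. (\<lambda>x. x (if ridx b = l then (\<not> s, k, a) else (s, ridx b, a))) x))"
    unfolding detf_def
    by (rule ext, rule arg_cong[where f=det]) (simp add: vec_eq_iff matf_def basis_of_def)
  also have "\<dots> \<in> poly_funs" by (intro poly_funs_det poly_funs.var)
  finally show ?thesis .
qed

definition Zset :: "nat \<Rightarrow> (nat \<Rightarrow> nat \<Rightarrow> nat) \<Rightarrow> ((bool \<times> nat \<times> 'r::finite) \<Rightarrow> 'k::field) set" where
  "Zset n A = {x. \<forall>i\<le>n. \<forall>j\<le>n.
     (Rs n A i \<le> Cs n A j \<longrightarrow> (\<forall>k<Rs n A i. \<forall>l. Cs n A j \<le> l \<and> l < CARD('r) \<longrightarrow> detf True k l x = 0)) \<and>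
     (Cs n A j \<le> Rs n A i \<longrightarrow> (\<forall>k<Cs n A j. \<forall>l. Rs n A i \<le> l \<and> l < CARD('r) \<longrightarrow> detf False k l x = 0))}"

lemma Zset_closed: "zariski_closed (Zset n A :: ((bool \<times> nat \<times> 'r::finite) \<Rightarrow> 'k::field) set)"
proof -
  let ?P = "(\<lambda>(s,k,l). detf s k l) ` {(s,k,l). \<exists>i\<le>n. \<exists>j\<le>n.
     (s \<and> Rs n A i \<le> Cs n A j \<and> k < Rs n A i \<and> Cs n A j \<le> l \<and> l < CARD('r)) \<or>
     (\<not> s \<and> Cs n A j \<le> Rs n A i \<and> k < Cs n A j \<and> Rs n A i \<le> l \<and> l < CARD('r))}"
  have "?P \<subseteq> poly_funs" using detf_poly by auto
  moreover have "(Zset n A :: ((bool \<times> nat \<times> 'r) \<Rightarrow> 'k) set) = {x. \<forall>p\<in>?P. p x = 0}"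
  proof (intro set_eqI iffI CollectI ballI)
    fix x :: "(bool \<times> nat \<times> 'r) \<Rightarrow> 'k" and p :: "((bool \<times> nat \<times> 'r) \<Rightarrow> 'k) \<Rightarrow> 'k"
    assume x: "x \<in> Zset n A" and p: "p \<in> ?P"
    then obtain s k l i j where pe: "p = detf s k l" and ij: "i \<le> n" "j \<le> n" and
      c: "(s \<and> Rs n A i \<le> Cs n A j \<and> k < Rs n A i \<and> Cs n A j \<le> l \<and> l < CARD('r)) \<or>
     (\<not> s \<and> Cs n A j \<le> Rs n A i \<and> k < Cs n A j \<and> Rs n A i \<le> l \<and> l < CARD('r))"
      by force
    from x ij have "(Rs n A i \<le> Cs n A j \<longrightarrow> (\<forall>k<Rs n A i. \<forall>l. Cs n A j \<le> l \<and> l < CARD('r) \<longrightarrow> detf True k l x = 0)) \<and>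
     (Cs n A j \<le> Rs n A i \<longrightarrow> (\<forall>k<Cs n A j. \<forall>l. Rs n A i \<le> l \<and> l < CARD('r) \<longrightarrow> detf False k l x = 0))"
      unfolding Zset_def by blast
    with c show "p x = 0" unfolding pe by (cases s) auto
  next
    fix x :: "(bool \<times> nat \<times> 'r) \<Rightarrow> 'k"
    assume H: "x \<in> {x. \<forall>p\<in>?P. p x = 0}"
    show "x \<in> Zset n A" unfolding Zset_def
    proof (intro CollectI allI impI conjI)
      fix i j k l assume "i \<le> n" "j \<le> n" "Rs n A i \<le> Cs n A j" "k < Rs n A i" "Cs n A j \<le> l \<and> l < CARD('r)"
      then have "detf True k l \<in> ?P" by (intro image_eqI[of _ _ "(True,k,l)"]) auto
      then show "detf True k l x = 0" using H by blast
    next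
      fix i j k l assume "i \<le> n" "j \<le> n" "Cs n A j \<le> Rs n A i" "k < Cs n A j" "Rs n A i \<le> l \<and> l < CARD('r)"
      then have "detf False k l \<in> ?P" by (intro image_eqI[of _ _ "(False,k,l)"]) auto
      then show "detf False k l x = 0" using H by blast
    qed
  qed
  ultimately show ?thesis unfolding zariski_closed_def by blast
qed

lemma sums_ro_co:
  assumes "A \<in> Theta n r"
  shows "(\<Sum>l=1..i. ro n A l) = Rs n A i" "(\<Sum>l=1..j. co n A l) = Cs n A j"
    "Rs n A n = r" "Cs n A n = r"
proof -
  show "(\<Sum>l=1..i. ro n A l) = Rs n A i" by (simp only: Rs_def NN_n_ro)
  show "(\<Sum>l=1..j. co n A l) = Cs n A j" by (simp only: Cs_def NN_n_co)
  show "Rs n A n = r" using assms by (simp add: Rs_def NN_def Theta_def)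
  show "Cs n A n = r" using assms by (simp add: Cs_def NN_def Theta_def)
qed

lemma preimage_char:
  fixes x :: "(bool \<times> nat \<times> 'r::finite) \<Rightarrow> 'k::field"
  assumes n: "n > 0" and A: "A \<in> Theta n CARD('r)"
    and NW: "\<forall>i j s t. 1 \<le> i \<and> i < j \<and> j \<le> n \<and> 1 \<le> s \<and> s < t \<and> t \<le> n \<longrightarrow> A i t * A j s = 0"
    and x: "x \<in> GL_pairs"
  shows "(flag_from n (ro n A) (basis_of x False), flag_from n (co n A) (basis_of x True)) \<in> orbit n A
         \<longleftrightarrow> x \<in> Zset n A"
proof -
  let ?g = "basis_of x False" and ?h = "basis_of x True"
  let ?f = "flag_from n (ro n A) ?g" and ?f' = "flag_from n (co n A) ?h"
  have gb: "is_basis_family ?g" and hb: "is_basis_family ?h" using x by (auto simp: GL_pairs_def)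
  have Fl: "is_flag n ?f" "is_flag n ?f'" using n by (auto intro: flag_from_is_flag)
  note S = sums_ro_co[OF A]
  have Rle: "Rs n A i \<le> CARD('r)" if "i \<le> n" for i
    using psum_le[OF that, of "ro n A"] S by metis
  have Cle: "Cs n A j \<le> CARD('r)" if "j \<le> n" for j
    using psum_le[OF that, of "co n A"] S by metis
  have fi: "?f i = vec.span (?g ` {..<Rs n A i})" if "i \<le> n" for i
    using flag_from_span[OF gb _ that, of "ro n A"] S by metis
  have fj: "?f' j = vec.span (?h ` {..<Cs n A j})" if "j \<le> n" for j
    using flag_from_span[OF hb _ that, of "co n A"] S by metis
  have di: "vec.dim (?f i) = Rs n A i" if "i \<le> n" for i
    using fi[OF that] dim_prefix[OF gb Rle[OF that]] by simp
  have dj: "vec.dim (?f' j) = Cs n A j" if "j \<le> n" for j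
    using fj[OF that] dim_prefix[OF hb Cle[OF that]] by simp
  have step: "dd ?f ?f' i j = NN A i j \<longleftrightarrow>
     (Rs n A i \<le> Cs n A j \<longrightarrow> (\<forall>k<Rs n A i. \<forall>l. Cs n A j \<le> l \<and> l < CARD('r) \<longrightarrow> detf True k l x = 0)) \<and>
     (Cs n A j \<le> Rs n A i \<longrightarrow> (\<forall>k<Cs n A j. \<forall>l. Rs n A i \<le> l \<and> l < CARD('r) \<longrightarrow> detf False k l x = 0))"
    if ij: "i \<le> n" "j \<le> n" for i j
  proof -
    have "NN A i j = min (vec.dim (?f i)) (vec.dim (?f' j))"
      using NW_min[OF NW ij] di[OF ij(1)] dj[OF ij(2)] by (simp add: Rs_def Cs_def)
    then have "dd ?f ?f' i j = NN A i j \<longleftrightarrow>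
      ((vec.dim (?f i) \<le> vec.dim (?f' j) \<longrightarrow> ?f i \<subseteq> ?f' j) \<and> (vec.dim (?f' j) \<le> vec.dim (?f i) \<longrightarrow> ?f' j \<subseteq> ?f i))"
      unfolding dd_def using dim_min_iff[OF flag_subspace[OF Fl(1)] flag_subspace[OF Fl(2)]] by simp
    also have "\<dots> \<longleftrightarrow> ((Rs n A i \<le> Cs n A j \<longrightarrow> ?f i \<subseteq> ?f' j) \<and> (Cs n A j \<le> Rs n A i \<longrightarrow> ?f' j \<subseteq> ?f i))"
      unfolding di[OF ij(1)] dj[OF ij(2)] ..
    also have "\<dots> \<longleftrightarrow> (Rs n A i \<le> Cs n A j \<longrightarrow> (\<forall>k<Rs n A i. \<forall>l. Cs n A j \<le> l \<and> l < CARD('r) \<longrightarrow> detf True k l x = 0)) \<and>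
     (Cs n A j \<le> Rs n A i \<longrightarrow> (\<forall>k<Cs n A j. \<forall>l. Rs n A i \<le> l \<and> l < CARD('r) \<longrightarrow> detf False k l x = 0))"
      unfolding fi[OF ij(1)] fj[OF ij(2)]
        span_sub_span_crit[OF hb Cle[OF ij(2)]] span_sub_span_crit[OF gb Rle[OF ij(1)]]
      by (simp add: detf_def)
    finally show ?thesis .
  qed
  show ?thesis
    unfolding orbit_iff_dd[OF Fl] Zset_def using step by auto
qed

lemma closed_if_NW:
  assumes n: "n > 0" and A: "A \<in> Theta n CARD('r::finite)"
    and NW: "\<forall>i j s t. 1 \<le> i \<and> i < j \<and> j \<le> n \<and> 1 \<le> s \<and> s < t \<and> t \<le> n \<longrightarrow> A i t * A j s = 0"
  shows "flag_closed n (ro n A) (co n A) (orbit n A :: ((nat \<Rightarrow> ('k::field^'r) set) \<times> (nat \<Rightarrow> ('k^'r) set)) set)"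
  unfolding flag_closed_def
proof (intro conjI exI[of _ "Zset n A"])
  show "(orbit n A :: ((nat \<Rightarrow> ('k::field^'r) set) \<times> (nat \<Rightarrow> ('k^'r) set)) set)
        \<subseteq> flags_of_type n (ro n A) \<times> flags_of_type n (co n A)"
    using orbit_types by fast
  show "zariski_closed (Zset n A :: ((bool \<times> nat \<times> 'r) \<Rightarrow> 'k) set)" by (rule Zset_closed)
  show "{x \<in> GL_pairs. (flag_from n (ro n A) (basis_of x False), flag_from n (co n A) (basis_of x True))
          \<in> (orbit n A :: ((nat \<Rightarrow> ('k::field^'r) set) \<times> (nat \<Rightarrow> ('k^'r) set)) set)} = GL_pairs \<inter> Zset n A"
    using preimage_char[OF n A NW] by blast
qed




lemma length_concat_map_upt:
  "length (concat (map F [1..<Suc m])) = (\<Sum>k=1..m. length (F k))"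
  by (induction m) auto

lemma take_concat_prefix:
  assumes "i \<le> m"
  shows "take (\<Sum>k=1..i. length (F k)) (concat (map F [1..<Suc m])) = concat (map F [1..<Suc i])"
  using assms
proof (induction m)
  case 0 then show ?case by simp
next
  case (Suc m)
  show ?case
  proof (cases "i \<le> m")
    case True
    have "(\<Sum>k=1..i. length (F k)) \<le> length (concat (map F [1..<Suc m]))"
      unfolding length_concat_map_upt by (rule sum_mono2) (use True in auto)
    then show ?thesis using Suc True by simp
  next
    case False
    then have "i = Suc m" using Suc by simp
    then show ?thesis using length_concat_map_upt[of F "Suc m"] by simp
  qed
qed

lemma set_concat_map_upt: "set (concat (map F [1..<Suc i])) = (\<Union>k\<in>{1..i}. set (F k))"
  by (simp add: atLeastLessThanSuc_atLeastAtMost del: upt_Suc)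

definition cells :: "nat \<Rightarrow> (nat \<Rightarrow> nat \<Rightarrow> nat) \<Rightarrow> (nat \<times> nat \<times> nat) set" where
  "cells n A = (SIGMA k:{1..n}. SIGMA l:{1..n}. {..<A k l})"

definition L1 :: "nat \<Rightarrow> (nat \<Rightarrow> nat \<Rightarrow> nat) \<Rightarrow> (nat \<times> nat \<times> nat) list" where
  "L1 n A = concat (map (\<lambda>k. concat (map (\<lambda>l. map (\<lambda>q. (k,l,q)) [0..<A k l]) [1..<Suc n])) [1..<Suc n])"

definition L2 :: "nat \<Rightarrow> (nat \<Rightarrow> nat \<Rightarrow> nat) \<Rightarrow> (nat \<times> nat \<times> nat) list" where
  "L2 n A = concat (map (\<lambda>l. concat (map (\<lambda>k. map (\<lambda>q. (k,l,q)) [0..<A k l]) [1..<Suc n])) [1..<Suc n])"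

lemma L1_prefix:
  assumes "i \<le> n"
  shows "set (take (Rs n A i) (L1 n A)) = {c \<in> cells n A. fst c \<le> i}"
proof -
  let ?F = "\<lambda>k. concat (map (\<lambda>l. map (\<lambda>q. (k,l,q)) [0..<A k l]) [1..<Suc n])"
  have len: "length (?F k) = ro n A k" for k
    unfolding length_concat_map_upt ro_def by simp
  have "Rs n A i = (\<Sum>k=1..i. length (?F k))"
    unfolding len by (simp add: Rs_def NN_n_ro)
  then have tk: "take (Rs n A i) (L1 n A) = concat (map ?F [1..<Suc i])"
    unfolding L1_def using take_concat_prefix[OF assms, of ?F] by (simp del: upt_Suc)
  have sF: "set (?F k) = {(k,l,q) | l q. l \<in> {1..n} \<and> q < A k l}" for k
    by (simp only: set_concat_map_upt set_map set_upt) auto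
  have "set (take (Rs n A i) (L1 n A)) = (\<Union>k\<in>{1..i}. set (?F k))"
    unfolding tk set_concat_map_upt ..
  also have "\<dots> = {c \<in> cells n A. fst c \<le> i}" using assms unfolding sF by (auto simp: cells_def)
  finally show ?thesis .
qed

lemma L2_prefix:
  assumes "j \<le> n"
  shows "set (take (Cs n A j) (L2 n A)) = {c \<in> cells n A. fst (snd c) \<le> j}"
proof -
  let ?F = "\<lambda>l. concat (map (\<lambda>k. map (\<lambda>q. (k,l,q)) [0..<A k l]) [1..<Suc n])"
  have len: "length (?F l) = co n A l" for l
    unfolding length_concat_map_upt co_def by simp
  have "Cs n A j = (\<Sum>l=1..j. length (?F l))"
    unfolding len by (simp add: Cs_def NN_n_co)
  then have tk: "take (Cs n A j) (L2 n A) = concat (map ?F [1..<Suc j])"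
    unfolding L2_def using take_concat_prefix[OF assms, of ?F] by (simp del: upt_Suc)
  have sF: "set (?F l) = {(k,l,q) | k q. k \<in> {1..n} \<and> q < A k l}" for l
    by (simp only: set_concat_map_upt set_map set_upt) auto
  have "set (take (Cs n A j) (L2 n A)) = (\<Union>l\<in>{1..j}. set (?F l))"
    unfolding tk set_concat_map_upt ..
  also have "\<dots> = {c \<in> cells n A. fst (snd c) \<le> j}" using assms unfolding sF by (auto simp: cells_def)
  finally show ?thesis .
qed

lemma L_length:
  assumes A: "A \<in> Theta n r"
  shows "length (L1 n A) = r" "length (L2 n A) = r"
proof -
  have "length (L1 n A) = (\<Sum>k=1..n. ro n A k)"
    unfolding L1_def length_concat_map_upt ro_def by simp
  then show "length (L1 n A) = r" using sums_ro_co[OF A] by simp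
  have "length (L2 n A) = (\<Sum>k=1..n. co n A k)"
    unfolding L2_def length_concat_map_upt co_def by simp
  then show "length (L2 n A) = r" using sums_ro_co[OF A] by simp
qed

lemma L_set:
  assumes A: "A \<in> Theta n r"
  shows "set (L1 n A) = cells n A" "set (L2 n A) = cells n A"
proof -
  have e1: "Rs n A n = length (L1 n A)" using L_length(1)[OF A] sums_ro_co(3)[OF A] by simp
  have "set (L1 n A) = set (take (Rs n A n) (L1 n A))" unfolding e1 by simp
  moreover have "{c \<in> cells n A. fst c \<le> n} = cells n A" by (auto simp: cells_def)
  ultimately show "set (L1 n A) = cells n A" using L1_prefix[of n n A] by simp
  have e2: "Cs n A n = length (L2 n A)" using L_length(2)[OF A] sums_ro_co(4)[OF A] by simp
  have "set (L2 n A) = set (take (Cs n A n) (L2 n A))" unfolding e2 by simp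
  moreover have "{c \<in> cells n A. fst (snd c) \<le> n} = cells n A" by (auto simp: cells_def)
  ultimately show "set (L2 n A) = cells n A" using L2_prefix[of n n A] by simp
qed

lemma cells_finite: "finite (cells n A)"
  by (simp add: cells_def)

lemma card_cells_sub:
  assumes "i \<le> n" "j \<le> n"
  shows "card {c \<in> cells n A. fst c \<le> i \<and> fst (snd c) \<le> j} = NN A i j"
proof -
  have "{c \<in> cells n A. fst c \<le> i \<and> fst (snd c) \<le> j} = (SIGMA k:{1..i}. SIGMA l:{1..j}. {..<A k l})"
    using assms by (auto simp: cells_def)
  then show ?thesis by (simp add: card_SigmaI NN_def)
qed

lemma card_cells:
  assumes A: "A \<in> Theta n r"
  shows "card (cells n A) = r"
proof -
  have "{c \<in> cells n A. fst c \<le> n \<and> fst (snd c) \<le> n} = cells n A" by (auto simp: cells_def)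
  then have "card (cells n A) = NN A n n" using card_cells_sub[of n n n A] by simp
  also have "\<dots> = r" using sums_ro_co(3)[OF A] unfolding Rs_def .
  finally show ?thesis .
qed




definition mk :: "(nat \<times> nat \<times> nat \<Rightarrow> 'k::field^'r::finite) \<Rightarrow> (nat \<times> nat \<times> nat) list \<Rightarrow> nat \<Rightarrow> 'k^'r" where
  "mk F xs p = (if p < CARD('r) then F (xs ! p) else 0)"

lemma mk_image_prefix:
  fixes F :: "nat \<times> nat \<times> nat \<Rightarrow> 'k::field^'r::finite"
  assumes "length xs = CARD('r)" "m \<le> CARD('r)"
  shows "mk F xs ` {..<m} = F ` set (take m xs)"
proof -
  have "mk F xs ` {..<m} = F ` ((!) xs ` {0..<m})"
    using assms(2) by (force simp: mk_def image_iff)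
  also have "\<dots> = F ` set (take m xs)" using assms by (simp add: nth_image)
  finally show ?thesis .
qed

locale constr =
  fixes n :: nat and A :: "nat \<Rightarrow> nat \<Rightarrow> nat" and \<phi> :: "nat \<times> nat \<times> nat \<Rightarrow> 'r::finite"
  assumes n: "n > 0" and A: "A \<in> Theta n CARD('r)" and \<phi>: "bij_betw \<phi> (cells n A) UNIV"
begin

definition E :: "nat \<times> nat \<times> nat \<Rightarrow> 'k::field^'r" where "E c = axis (\<phi> c) 1"

definition P :: "nat \<Rightarrow> (nat \<times> nat \<times> nat) set" where "P i = {c \<in> cells n A. fst c \<le> i}"
definition Q :: "nat \<Rightarrow> (nat \<times> nat \<times> nat) set" where "Q j = {c \<in> cells n A. fst (snd c) \<le> j}"

lemma lens: "length (L1 n A) = CARD('r)" "length (L2 n A) = CARD('r)"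
  using L_length[OF A] by auto

lemma sets: "set (L1 n A) = cells n A" "set (L2 n A) = cells n A"
  using L_set[OF A] by auto

lemma basis_mk:
  fixes F :: "nat \<times> nat \<times> nat \<Rightarrow> 'k::field^'r"
  assumes "set xs = cells n A" "length xs = CARD('r)" "vec.span (F ` cells n A) = UNIV"
  shows "is_basis_family (mk F xs)"
  unfolding is_basis_family_iff mk_image_prefix[OF assms(2) order.refl]
  using assms by simp

lemma flag_mk:
  fixes F :: "nat \<times> nat \<times> nat \<Rightarrow> 'k::field^'r"
  assumes "set xs = cells n A" "length xs = CARD('r)" "vec.span (F ` cells n A) = UNIV"
    and S: "(\<Sum>l=1..n. lam l) = CARD('r)" and i: "i \<le> n"
  shows "flag_from n lam (mk F xs) i = vec.span (F ` set (take (\<Sum>l=1..i. lam l) xs))"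
proof -
  have le: "(\<Sum>l=1..i. lam l) \<le> CARD('r)" using psum_le[OF i, of lam] S by simp
  show ?thesis
    using flag_from_span[OF basis_mk[OF assms(1-3)] S i] mk_image_prefix[OF assms(2) le, where F=F] by simp
qed

lemma E_image: "(E :: _ \<Rightarrow> 'k::field^'r) ` X = (\<lambda>i. axis i 1) ` (\<phi> ` X)"
  by (auto simp: E_def)

lemma span_E_cells: "vec.span ((E :: _ \<Rightarrow> 'k::field^'r) ` cells n A) = UNIV"
proof -
  have "\<phi> ` cells n A = UNIV" using \<phi> by (simp add: bij_betw_def)
  then show ?thesis unfolding E_image span_axis by simp
qed

lemma dim_E:
  assumes "X \<subseteq> cells n A" "Y \<subseteq> cells n A"
  shows "vec.dim (vec.span ((E :: _ \<Rightarrow> 'k::field^'r) ` X) \<inter> vec.span (E ` Y)) = card (X \<inter> Y)"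
proof -
  have inj: "inj_on \<phi> (cells n A)" using \<phi> by (simp add: bij_betw_def)
  have "\<phi> ` X \<inter> \<phi> ` Y = \<phi> ` (X \<inter> Y)"
    using inj_on_image_Int[OF inj assms] by simp
  moreover have "card (\<phi> ` (X \<inter> Y)) = card (X \<inter> Y)"
    using inj assms by (intro card_image) (auto intro: inj_on_subset)
  ultimately show ?thesis unfolding E_image dim_span_axis_Int[where 'k='k] by simp
qed

lemma flagP:
  assumes "i \<le> n"
  shows "flag_from n (ro n A) (mk E (L1 n A)) i = vec.span ((E :: _ \<Rightarrow> 'k::field^'r) ` P i)"
proof -
  have S: "(\<Sum>l=1..n. ro n A l) = CARD('r)" using sums_ro_co(1,3)[OF A] by simp
  show ?thesis
    using flag_mk[OF sets(1) lens(1) span_E_cells S assms] sums_ro_co(1)[OF A, of i] L1_prefix[OF assms, of A]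
    by (simp add: P_def)
qed

lemma flagQ:
  fixes F :: "nat \<times> nat \<times> nat \<Rightarrow> 'k::field^'r"
  assumes "vec.span (F ` cells n A) = UNIV" "j \<le> n"
  shows "flag_from n (co n A) (mk F (L2 n A)) j = vec.span (F ` Q j)"
proof -
  have S: "(\<Sum>l=1..n. co n A l) = CARD('r)" using sums_ro_co(2,4)[OF A] by simp
  show ?thesis
    using flag_mk[OF sets(2) lens(2) assms(1) S assms(2)] sums_ro_co(2)[OF A, of j] L2_prefix[OF assms(2), of A]
    by (simp add: Q_def)
qed

end




context constr begin

lemma E_comp:
  assumes "c \<in> cells n A" "d \<in> cells n A"
  shows "(E c :: 'k::field^'r) $ \<phi> d = (if c = d then 1 else 0)"
proof -
  have "inj_on \<phi> (cells n A)" using \<phi> by (simp add: bij_betw_def)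
  then show ?thesis using assms by (auto simp: E_def axis_def inj_on_def)
qed

end

locale degen = constr n A \<phi> for n A and \<phi> :: "nat \<times> nat \<times> nat \<Rightarrow> 'r::finite" +
  fixes i0 j0 s0 t0 :: nat
  assumes ij: "1 \<le> i0" "i0 < j0" "j0 \<le> n" and st: "1 \<le> s0" "s0 < t0" "t0 \<le> n"
    and pos: "A i0 t0 > 0" "A j0 s0 > 0"
begin

abbreviation "u \<equiv> (i0, t0, 0::nat)"
abbreviation "w \<equiv> (j0, s0, 0::nat)"

lemma neq [simp]: "i0 \<noteq> j0" "j0 \<noteq> i0" "s0 \<noteq> t0" "t0 \<noteq> s0"
  using ij st by auto

lemma uw: "u \<in> cells n A" "w \<in> cells n A" "u \<noteq> w"
  using ij st pos by (auto simp: cells_def)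

definition Fl :: "'k::field \<Rightarrow> nat \<times> nat \<times> nat \<Rightarrow> 'k^'r" where
  "Fl t c = (if c = w then E u + t *s E w else if c = u then E w else E c)"

definition Gf :: "'k::field \<Rightarrow> 'k^'r \<Rightarrow> 'k^'r" where
  "Gf t v = v + (v $ \<phi> w) *s (E u + (t - 1) *s E w)"

lemma Gf_E:
  fixes t :: "'k::field"
  assumes "c \<in> cells n A"
  shows "Gf t (E c) = (if c = w then E u + t *s E w else E c)"
proof (cases "c = w")
  case True
  have e: "(E w :: 'k^'r) $ \<phi> w = 1" using E_comp[where 'k='k, OF uw(2) uw(2)] by simp
  show ?thesis using True by (simp add: Gf_def vec_eq_iff algebra_simps e)
next
  case False
  have e: "(E c :: 'k^'r) $ \<phi> w = 0" using E_comp[where 'k='k, OF assms uw(2)] False by simp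
  show ?thesis using False by (simp add: Gf_def vec_eq_iff algebra_simps e)
qed

lemma Gf_lin: "Vector_Spaces.linear (*s) (*s) (Gf t)"
  by (auto simp: Gf_def Vector_Spaces.linear_iff vec_eq_iff algebra_simps vec.vector_space_axioms)

lemma Gf_w:
  fixes t :: "'k::field"
  shows "Gf t v $ \<phi> w = t * v $ \<phi> w"
proof -
  have e1: "(E w :: 'k^'r) $ \<phi> w = 1" using E_comp[where 'k='k, OF uw(2) uw(2)] by simp
  have e2: "(E u :: 'k^'r) $ \<phi> w = 0" using E_comp[where 'k='k, OF uw(1) uw(2)] uw(3) by simp
  show ?thesis by (simp add: Gf_def algebra_simps e1 e2)
qed

lemma Gf_inj: assumes "t \<noteq> 0" shows "inj (Gf t)"
proof
  fix v1 v2 assume e: "Gf t v1 = Gf t v2"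
  then have "t * v1 $ \<phi> w = t * v2 $ \<phi> w" using Gf_w by metis
  then have a: "v1 $ \<phi> w = v2 $ \<phi> w" using assms by simp
  from e have "v1 + (v1 $ \<phi> w) *s (E u + (t - 1) *s E w) = v2 + (v2 $ \<phi> w) *s (E u + (t - 1) *s E w)"
    by (simp add: Gf_def)
  then show "v1 = v2" unfolding a by simp
qed

lemma span_Gf: "vec.span (Gf t ` S) = Gf t ` vec.span S"
proof -
  have e: "(*v) (matrix (Gf t)) = Gf t" by (rule matrix_vector_mul(1)[OF Gf_lin])
  show ?thesis using vec.span_image[of "matrix (Gf t)" S] unfolding e .
qed

lemma span_eq_mut:
  assumes "\<And>a. a \<in> X \<Longrightarrow> a \<in> vec.span Y" "\<And>a. a \<in> Y \<Longrightarrow> a \<in> vec.span X"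
  shows "vec.span X = vec.span (Y :: ('k::field^'r) set)"
  using assms vec.span_eq by blast

lemma spanFl_UNIV: "vec.span ((Fl t :: _ \<Rightarrow> 'k::field^'r) ` cells n A) = UNIV"
proof -
  let ?S = "vec.span ((Fl t :: _ \<Rightarrow> 'k::field^'r) ` cells n A)"
  have Ew: "E w \<in> ?S" using uw by (intro vec.span_base image_eqI[of _ _ u]) (auto simp: Fl_def)
  have Fw: "E u + t *s E w \<in> ?S" using uw by (intro vec.span_base image_eqI[of _ _ w]) (auto simp: Fl_def)
  have "E u = (E u + t *s E w) - t *s E w" by simp
  then have Eu: "E u \<in> ?S" using Ew Fw by (metis vec.span_diff vec.span_scale)
  have "E c \<in> ?S" if "c \<in> cells n A" for c
  proof (cases "c = u \<or> c = w")
    case True then show ?thesis using Eu Ew by auto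
  next
    case False then show ?thesis using that
      by (intro vec.span_base image_eqI[of _ _ c]) (auto simp: Fl_def)
  qed
  then have "E ` cells n A \<subseteq> ?S" by auto
  then have "vec.span (E ` cells n A) \<subseteq> ?S" by (metis vec.span_minimal vec.subspace_span)
  then show ?thesis using span_E_cells by auto
qed

lemma spanQ:
  assumes t: "t \<noteq> 0" and j: "j \<le> n"
  shows "vec.span ((Fl t :: _ \<Rightarrow> 'k::field^'r) ` Q j) = Gf t ` vec.span (E ` Q j)"
proof -
  have Qc: "Q j \<subseteq> cells n A" by (auto simp: Q_def)
  have GE: "Gf t ` E ` Q j = (\<lambda>c. if c = w then E u + t *s E w else E c) ` Q j"
    unfolding image_image
  proof (rule image_cong[OF refl])
    fix c assume "c \<in> Q j"
    then show "Gf t (E c) = (if c = w then E u + t *s E w else E c)" using Gf_E[of c t] Qc by blast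
  qed
  have "vec.span ((Fl t :: _ \<Rightarrow> 'k::field^'r) ` Q j) = vec.span ((\<lambda>c. if c = w then E u + t *s E w else E c) ` Q j)"
  proof (cases "u \<in> Q j")
    case False
    then have "(Fl t :: _ \<Rightarrow> 'k::field^'r) ` Q j = (\<lambda>c. if c = w then E u + t *s E w else E c) ` Q j"
      by (intro image_cong refl) (auto simp: Fl_def)
    then show ?thesis by simp
  next
    case True
    then have wQ: "w \<in> Q j" using st uw by (auto simp: Q_def)
    show ?thesis
    proof (rule span_eq_mut)
      fix a assume "a \<in> (Fl t :: _ \<Rightarrow> 'k::field^'r) ` Q j"
      then obtain c where c: "c \<in> Q j" "a = Fl t c" by blast
      let ?T = "vec.span ((\<lambda>c. if c = w then E u + t *s E w else (E c :: 'k^'r)) ` Q j)"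
      show "a \<in> ?T"
      proof (cases "c = u")
        case True
        have m1: "E u + t *s E w \<in> ?T" using wQ by (intro vec.span_base image_eqI[of _ _ w]) auto
        have m2: "E u \<in> ?T" using \<open>u \<in> Q j\<close> uw by (intro vec.span_base image_eqI[of _ _ u]) auto
        have ew: "E w = (1 / t) *s ((E u + t *s E w) - E u)" using t by (simp add: vec_eq_iff field_simps)
        have "E w \<in> ?T" using vec.span_scale[OF vec.span_diff[OF m1 m2], of "1 / t"] unfolding ew[symmetric] .
        moreover have "a = E w" using c True uw by (simp add: Fl_def)
        ultimately show ?thesis by simp
      next
        case False
        then show ?thesis using c by (intro vec.span_base image_eqI[of _ _ c]) (auto simp: Fl_def)
      qed
    next
      fix a assume "a \<in> (\<lambda>c. if c = w then E u + t *s E w else (E c :: 'k^'r)) ` Q j"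
      then obtain c where c: "c \<in> Q j" "a = (if c = w then E u + t *s E w else E c)" by blast
      let ?T = "vec.span ((Fl t :: _ \<Rightarrow> 'k::field^'r) ` Q j)"
      show "a \<in> ?T"
      proof (cases "c = u")
        case True
        have m1: "E u + t *s E w \<in> ?T" using wQ by (intro vec.span_base image_eqI[of _ _ w]) (auto simp: Fl_def)
        have m2: "E w \<in> ?T" using \<open>u \<in> Q j\<close> uw by (intro vec.span_base image_eqI[of _ _ u]) (auto simp: Fl_def)
        have eu: "E u = (E u + t *s E w) - t *s E w" by simp
        have "E u \<in> ?T" using vec.span_diff[OF m1 vec.span_scale[OF m2, of t]] unfolding eu[symmetric] .
        then show ?thesis using c True uw by simp
      next
        case False
        then show ?thesis using c by (intro vec.span_base image_eqI[of _ _ c]) (auto simp: Fl_def)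
      qed
    qed
  qed
  also have "\<dots> = vec.span (Gf t ` E ` Q j)" using GE by simp
  also have "\<dots> = Gf t ` vec.span (E ` Q j)" by (rule span_Gf)
  finally show ?thesis .
qed

lemma spanP:
  assumes t: "t \<noteq> 0" and i: "i \<le> n"
  shows "vec.span ((E :: _ \<Rightarrow> 'k::field^'r) ` P i) = Gf t ` vec.span (E ` P i)"
proof -
  have Pc: "P i \<subseteq> cells n A" by (auto simp: P_def)
  have GE: "Gf t ` E ` P i = (\<lambda>c. if c = w then E u + t *s E w else E c) ` P i"
    unfolding image_image
  proof (rule image_cong[OF refl])
    fix c assume "c \<in> P i"
    then show "Gf t (E c) = (if c = w then E u + t *s E w else E c)" using Gf_E[of c t] Pc by blast
  qed
  have "vec.span ((E :: _ \<Rightarrow> 'k::field^'r) ` P i) = vec.span ((\<lambda>c. if c = w then E u + t *s E w else E c) ` P i)"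
  proof (cases "w \<in> P i")
    case False
    then have "(E :: _ \<Rightarrow> 'k::field^'r) ` P i = (\<lambda>c. if c = w then E u + t *s E w else E c) ` P i"
      by (intro image_cong refl) auto
    then show ?thesis by simp
  next
    case True
    then have uP: "u \<in> P i" using ij uw by (auto simp: P_def)
    show ?thesis
    proof (rule span_eq_mut)
      fix a assume "a \<in> (E :: _ \<Rightarrow> 'k::field^'r) ` P i"
      then obtain c where c: "c \<in> P i" "a = E c" by blast
      let ?T = "vec.span ((\<lambda>c. if c = w then E u + t *s E w else (E c :: 'k^'r)) ` P i)"
      show "a \<in> ?T"
      proof (cases "c = w")
        case True
        have m1: "E u + t *s E w \<in> ?T" using \<open>w \<in> P i\<close> by (intro vec.span_base image_eqI[of _ _ w]) auto
        have m2: "E u \<in> ?T" using uP uw by (intro vec.span_base image_eqI[of _ _ u]) auto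
        have ew: "E w = (1 / t) *s ((E u + t *s E w) - E u)" using t by (simp add: vec_eq_iff field_simps)
        have "E w \<in> ?T" using vec.span_scale[OF vec.span_diff[OF m1 m2], of "1 / t"] unfolding ew[symmetric] .
        then show ?thesis using c True by simp
      next
        case False
        then show ?thesis using c by (intro vec.span_base image_eqI[of _ _ c]) auto
      qed
    next
      fix a assume "a \<in> (\<lambda>c. if c = w then E u + t *s E w else (E c :: 'k^'r)) ` P i"
      then obtain c where c: "c \<in> P i" "a = (if c = w then E u + t *s E w else E c)" by blast
      let ?T = "vec.span ((E :: _ \<Rightarrow> 'k::field^'r) ` P i)"
      show "a \<in> ?T"
      proof (cases "c = w")
        case True
        have m1: "E w \<in> ?T" using \<open>w \<in> P i\<close> by (intro vec.span_base) auto
        have m2: "E u \<in> ?T" using uP by (intro vec.span_base) auto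
        have "E u + t *s E w \<in> ?T" using vec.span_add[OF m2 vec.span_scale[OF m1, of t]] .
        then show ?thesis using c True by simp
      next
        case False
        then show ?thesis using c by (intro vec.span_base) auto
      qed
    qed
  qed
  also have "\<dots> = vec.span (Gf t ` E ` P i)" using GE by simp
  also have "\<dots> = Gf t ` vec.span (E ` P i)" by (rule span_Gf)
  finally show ?thesis .
qed

lemma PQ_card: "i \<le> n \<Longrightarrow> j \<le> n \<Longrightarrow> card (P i \<inter> Q j) = NN A i j"
  using card_cells_sub[of i n j A] by (simp add: P_def Q_def Int_def conj_commute conj_left_commute)

lemma dd_t:
  assumes t: "t \<noteq> 0" and i: "i \<le> n" and j: "j \<le> n"
  shows "vec.dim (vec.span ((E :: _ \<Rightarrow> 'k::field^'r) ` P i) \<inter> vec.span (Fl t ` Q j)) = NN A i j"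
proof -
  let ?X = "vec.span ((E :: _ \<Rightarrow> 'k::field^'r) ` P i)" and ?Y = "vec.span ((E :: _ \<Rightarrow> 'k::field^'r) ` Q j)"
  have "vec.span ((E :: _ \<Rightarrow> 'k::field^'r) ` P i) \<inter> vec.span (Fl t ` Q j) = Gf t ` ?X \<inter> Gf t ` ?Y"
    using spanP[OF t i] spanQ[OF t j] by simp
  also have "\<dots> = Gf t ` (?X \<inter> ?Y)" using Gf_inj[OF t] by (simp add: image_Int)
  moreover have "vec.dim (Gf t ` (?X \<inter> ?Y)) = vec.dim (?X \<inter> ?Y)"
    by (rule vec.dim_image_eq[OF Gf_lin]) (use Gf_inj[OF t] in \<open>auto simp: inj_def inj_on_def\<close>)
  ultimately have "vec.dim (vec.span ((E :: _ \<Rightarrow> 'k::field^'r) ` P i) \<inter> vec.span (Fl t ` Q j)) = vec.dim (?X \<inter> ?Y)"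
    by simp
  also have "\<dots> = card (P i \<inter> Q j)" by (rule dim_E) (auto simp: P_def Q_def)
  also have "\<dots> = NN A i j" using PQ_card i j by simp
  finally show ?thesis .
qed

definition sw :: "nat \<times> nat \<times> nat \<Rightarrow> nat \<times> nat \<times> nat" where
  "sw c = (if c = u then w else if c = w then u else c)"

lemma dd_0:
  shows "vec.dim (vec.span ((E :: _ \<Rightarrow> 'k::field^'r) ` P i0) \<inter> vec.span (Fl 0 ` Q s0)) = NN A i0 s0 + 1"
proof -
  have F0: "(Fl 0 :: _ \<Rightarrow> 'k::field^'r) ` Q s0 = E ` (sw ` Q s0)"
    by (force simp: Fl_def sw_def image_iff)
  have swQ: "sw ` Q s0 \<subseteq> cells n A" using uw by (auto simp: sw_def Q_def)
  have key: "P i0 \<inter> sw ` Q s0 = insert u (P i0 \<inter> Q s0)"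
  proof (rule set_eqI)
    fix c
    have inv: "sw (sw c) = c" for c by (simp add: sw_def)
    have "c \<in> sw ` Q s0 \<longleftrightarrow> sw c \<in> Q s0"
    proof
      assume "c \<in> sw ` Q s0" then obtain d where "d \<in> Q s0" "c = sw d" by blast
      then show "sw c \<in> Q s0" using inv by simp
    next
      assume "sw c \<in> Q s0" then show "c \<in> sw ` Q s0" using inv by (metis image_eqI)
    qed
    then show "c \<in> P i0 \<inter> sw ` Q s0 \<longleftrightarrow> c \<in> insert u (P i0 \<inter> Q s0)"
      using uw ij st by (auto simp: sw_def P_def Q_def)
  qed
  have un: "u \<notin> P i0 \<inter> Q s0" using st by (auto simp: Q_def)
  have fin: "finite (P i0 \<inter> Q s0)" using cells_finite by (auto simp: P_def)
  have "vec.dim (vec.span ((E :: _ \<Rightarrow> 'k::field^'r) ` P i0) \<inter> vec.span (Fl 0 ` Q s0)) = card (P i0 \<inter> sw ` Q s0)"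
    unfolding F0 by (rule dim_E[OF _ swQ]) (auto simp: P_def)
  also have "\<dots> = card (P i0 \<inter> Q s0) + 1" using key un fin by simp
  also have "\<dots> = NN A i0 s0 + 1" using PQ_card ij st by simp
  finally show ?thesis .
qed

end




context degen begin

lemma not_closed:
  assumes cl: "flag_closed n (ro n A) (co n A)
     (orbit n A :: ((nat \<Rightarrow> ('k::alg_closed_field^'r) set) \<times> (nat \<Rightarrow> ('k^'r) set)) set)"
  shows False
proof -
  obtain Z :: "((bool \<times> nat \<times> 'r) \<Rightarrow> 'k) set" where Zc: "zariski_closed Z" and
    pre: "{x \<in> GL_pairs. (flag_from n (ro n A) (basis_of x False), flag_from n (co n A) (basis_of x True))
          \<in> (orbit n A :: ((nat \<Rightarrow> ('k^'r) set) \<times> (nat \<Rightarrow> ('k^'r) set)) set)} = GL_pairs \<inter> Z"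
    using cl unfolding flag_closed_def by blast
  obtain PP where PP: "PP \<subseteq> poly_funs" and Zd: "Z = {x. \<forall>p\<in>PP. p x = 0}"
    using Zc unfolding zariski_closed_def by blast
  define b :: "nat \<Rightarrow> 'k^'r" where "b = mk E (L1 n A)"
  define hh :: "'k \<Rightarrow> nat \<Rightarrow> 'k^'r" where "hh t = mk (Fl t) (L2 n A)" for t
  define X :: "'k \<Rightarrow> (bool \<times> nat \<times> 'r) \<Rightarrow> 'k" where
    "X t = (\<lambda>(s,p,c). if s then hh t p $ c else b p $ c)" for t
  have boT: "basis_of (X t) True = hh t" for t
    by (rule ext) (simp add: basis_of_def X_def vec_eq_iff)
  have boF: "basis_of (X t) False = b" for t
    by (rule ext) (simp add: basis_of_def X_def vec_eq_iff)
  have bb: "is_basis_family b" unfolding b_def by (rule basis_mk[OF sets(1) lens(1) span_E_cells])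
  have hb: "is_basis_family (hh t)" for t unfolding hh_def by (rule basis_mk[OF sets(2) lens(2) spanFl_UNIV])
  have GL: "X t \<in> GL_pairs" for t
    unfolding GL_pairs_def
  proof (intro CollectI conjI allI impI)
    fix s j c assume "CARD('r) \<le> j"
    then show "X t (s, j, c) = 0" by (simp add: X_def b_def hh_def mk_def)
  next
    show "is_basis_family (basis_of (X t) False)" unfolding boF by (rule bb)
  next
    show "is_basis_family (basis_of (X t) True)" unfolding boT by (rule hb)
  qed
  have Fl1: "is_flag n (flag_from n (ro n A) b)" and Fl2: "is_flag n (flag_from n (co n A) (hh t))" for t
    using n by (auto intro: flag_from_is_flag)
  have ddX: "dd (flag_from n (ro n A) b) (flag_from n (co n A) (hh t)) i j =
      vec.dim (vec.span ((E :: _ \<Rightarrow> 'k^'r) ` P i) \<inter> vec.span (Fl t ` Q j))" if "i \<le> n" "j \<le> n" for t i j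
    unfolding dd_def b_def hh_def flagP[OF that(1)] flagQ[OF spanFl_UNIV that(2)] ..
  have inpre: "X t \<in> Z" if t: "t \<noteq> 0" for t
  proof -
    have "(flag_from n (ro n A) b, flag_from n (co n A) (hh t)) \<in>
       (orbit n A :: ((nat \<Rightarrow> ('k^'r) set) \<times> (nat \<Rightarrow> ('k^'r) set)) set)"
      unfolding orbit_iff_dd[OF Fl1 Fl2] using ddX dd_t[OF t] by simp
    then have "X t \<in> GL_pairs \<inter> Z" unfolding pre[symmetric] using GL boT boF by simp
    then show ?thesis by simp
  qed
  have notpre: "(flag_from n (ro n A) b, flag_from n (co n A) (hh 0)) \<notin>
       (orbit n A :: ((nat \<Rightarrow> ('k^'r) set) \<times> (nat \<Rightarrow> ('k^'r) set)) set)"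
  proof
    assume "(flag_from n (ro n A) b, flag_from n (co n A) (hh 0)) \<in>
       (orbit n A :: ((nat \<Rightarrow> ('k^'r) set) \<times> (nat \<Rightarrow> ('k^'r) set)) set)"
    then have H: "\<forall>i\<le>n. \<forall>j\<le>n. dd (flag_from n (ro n A) b) (flag_from n (co n A) (hh 0)) i j = NN A i j"
      using orbit_iff_dd[OF Fl1 Fl2] by blast
    have a: "i0 \<le> n" "s0 \<le> n" using ij st by auto
    have "dd (flag_from n (ro n A) b) (flag_from n (co n A) (hh 0)) i0 s0 = NN A i0 s0"
      using H a by blast
    moreover have "dd (flag_from n (ro n A) b) (flag_from n (co n A) (hh 0)) i0 s0 =
      vec.dim (vec.span ((E :: _ \<Rightarrow> 'k^'r) ` P i0) \<inter> vec.span (Fl 0 ` Q s0))" by (rule ddX[OF a])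
    ultimately show False using dd_0[where 'k='k] by linarith
  qed
  have coord: "\<exists>Q. \<forall>t. X t v = poly Q t" for v
  proof -
    obtain s p c where v: "v = (s, p, c)" by (cases v) auto
    show ?thesis
    proof (cases "s \<and> p < CARD('r) \<and> L2 n A ! p = w")
      case True
      have "X t v = (E u :: 'k^'r) $ c + t * (E w :: 'k^'r) $ c" for t
        using True unfolding v X_def hh_def mk_def Fl_def by simp
      then have "X t v = poly [:(E u :: 'k^'r) $ c, (E w :: 'k^'r) $ c:] t" for t by simp
      then show ?thesis by blast
    next
      case False
      have "X t v = X 0 v" for t
        using False unfolding v X_def hh_def mk_def Fl_def by (cases s) auto
      then have "X t v = poly [:X 0 v:] t" for t by simp
      then show ?thesis by blast
    qed
  qed
  have "X 0 \<in> Z"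
    unfolding Zd
  proof (intro CollectI ballI)
    fix p assume p: "p \<in> PP"
    obtain Q where Q: "\<forall>t. p (X t) = poly Q t"
      using poly_funs_curve[of p X] PP p coord by blast
    have "poly Q t = 0" if "t \<noteq> 0" for t
      using inpre[OF that] p Q unfolding Zd by auto
    then have "poly Q 0 = 0" by (rule poly_zero_off0)
    then show "p (X 0) = 0" using Q by simp
  qed
  then have "X 0 \<in> GL_pairs \<inter> Z" using GL by simp
  then have "X 0 \<in> {x \<in> GL_pairs. (flag_from n (ro n A) (basis_of x False), flag_from n (co n A) (basis_of x True))
          \<in> (orbit n A :: ((nat \<Rightarrow> ('k^'r) set) \<times> (nat \<Rightarrow> ('k^'r) set)) set)}" using pre by simp
  then show False using notpre boT boF by simp
qed

end


theorem mainTheorem2: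
  fixes A :: "nat \<Rightarrow> nat \<Rightarrow> nat" and n :: nat
  assumes "n > 0" and "A \<in> Theta n CARD('r::finite)"
  shows "flag_closed n (ro n A) (co n A)
           (orbit n A :: ((nat \<Rightarrow> ('k::alg_closed_field^'r) set) \<times> (nat \<Rightarrow> ('k^'r) set)) set)
         \<longleftrightarrow> (\<forall>i j s t. 1 \<le> i \<and> i < j \<and> j \<le> n \<and> 1 \<le> s \<and> s < t \<and> t \<le> n
                  \<longrightarrow> A i t * A j s = 0)"
proof
  assume NW: "\<forall>i j s t. 1 \<le> i \<and> i < j \<and> j \<le> n \<and> 1 \<le> s \<and> s < t \<and> t \<le> n
                  \<longrightarrow> A i t * A j s = 0"
  show "flag_closed n (ro n A) (co n A)
           (orbit n A :: ((nat \<Rightarrow> ('k::alg_closed_field^'r) set) \<times> (nat \<Rightarrow> ('k^'r) set)) set)"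
    by (rule closed_if_NW[OF assms NW])
next
  assume cl: "flag_closed n (ro n A) (co n A)
           (orbit n A :: ((nat \<Rightarrow> ('k::alg_closed_field^'r) set) \<times> (nat \<Rightarrow> ('k^'r) set)) set)"
  show "\<forall>i j s t. 1 \<le> i \<and> i < j \<and> j \<le> n \<and> 1 \<le> s \<and> s < t \<and> t \<le> n
                  \<longrightarrow> A i t * A j s = 0"
  proof (rule ccontr)
    assume "\<not> (\<forall>i j s t. 1 \<le> i \<and> i < j \<and> j \<le> n \<and> 1 \<le> s \<and> s < t \<and> t \<le> n
                  \<longrightarrow> A i t * A j s = 0)"
    then obtain i j s t where c: "1 \<le> i" "i < j" "j \<le> n" "1 \<le> s" "s < t" "t \<le> n"
      and nz: "A i t * A j s \<noteq> 0" by blast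
    have cc: "card (cells n A) = card (UNIV :: 'r set)" using card_cells[OF assms(2)] by simp
    have "\<exists>h. bij_betw h (cells n A) (UNIV :: 'r set)"
      by (rule finite_same_card_bij) (simp_all add: cells_finite cc)
    then obtain \<phi> :: "nat \<times> nat \<times> nat \<Rightarrow> 'r" where \<phi>: "bij_betw \<phi> (cells n A) UNIV"
      by blast
    interpret degen n A \<phi> i j s t
      by unfold_locales (use assms \<phi> c nz in auto)
    show False by (rule not_closed[OF cl])
  qed
qed

end
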